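(* Let $g_1,g_2\in\mathcal{G}_0$ with $g_2(x)>0$ for $x\in(0,1)$. Suppose the limit $L=\lim_{x\to0^+}g_1(x)/g_2(x)$ exists and is finite. Then for every finite partition $\mathcal{P}$ with $h(g_2,\mathcal{P})<\infty$ we have $h(g_1,\mathcal{P})=L\cdot h(g_2,\mathcal{P})$.
   Context: $\mathcal{G}_0$ is the set of concave functions $g:[0,1]\to\mathbb{R}$ with $g(0)=\lim_{x\to0^+}g(x)=0$. $T$ is a measure-preserving map of a probability space $(X,\Sigma,\mu)$. For a finite measurable partition $\mathcal{P}$, let $\mathcal{P}_n=\bigvee_{i=0}^{n-1}T^{-i}\mathcal{P}$, $H(g,\mathcal{P})=\sum_{A\in\mathcal{P}}g(\mu(A))$, and $h(g,\mathcal{P})=\limsup_{n\to\infty}\frac1nH(g,\mathcal{P}_n)$. *)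

theory Defs
  imports "HOL-Probability.Probability"
begin

definition G0 :: "(real \<Rightarrow> real) set" where
  "G0 = {g. concave_on {0..1} g \<and> g 0 = 0 \<and> (g \<longlongrightarrow> 0) (at_right 0)}"

definition measure_preserving_map :: "'a measure \<Rightarrow> ('a \<Rightarrow> 'a) \<Rightarrow> bool" where
  "measure_preserving_map M T \<longleftrightarrow> T \<in> M \<rightarrow>\<^sub>M M \<and>
     (\<forall>A\<in>sets M. emeasure M (T -` A \<inter> space M) = emeasure M A)"

definition finite_partition :: "'a measure \<Rightarrow> 'a set set \<Rightarrow> bool" where
  "finite_partition M P \<longleftrightarrow> finite P \<and> P \<subseteq> sets M \<and> disjoint P \<and> \<Union>P = space M"

definition iter_join :: "'a measure \<Rightarrow> ('a \<Rightarrow> 'a) \<Rightarrow> 'a set set \<Rightarrow> nat \<Rightarrow> 'a set set" where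
  "iter_join M T P n =
     {C. C \<noteq> {} \<and> (\<exists>a. (\<forall>i<n. a i \<in> P) \<and>
            C = space M \<inter> (\<Inter>i\<in>{..<n}. (T ^^ i) -` (a i)))}"

definition Hg :: "'a measure \<Rightarrow> (real \<Rightarrow> real) \<Rightarrow> 'a set set \<Rightarrow> real" where
  "Hg M g P = (\<Sum>A\<in>P. g (measure M A))"

definition hg :: "'a measure \<Rightarrow> ('a \<Rightarrow> 'a) \<Rightarrow> (real \<Rightarrow> real) \<Rightarrow> 'a set set \<Rightarrow> ereal" where
  "hg M T g P = limsup (\<lambda>n. ereal (Hg M g (iter_join M T P n) / real n))"

end

theory Submission imports Defs begin


lemma iter_join_finite:
  assumes "finite P" shows "finite (iter_join M T P n)"
proof -
  let ?f = "\<lambda>a. space M \<inter> (\<Inter>i\<in>{..<n}. (T ^^ i) -` (a i))"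
  have "iter_join M T P n \<subseteq> ?f ` (PiE {..<n} (\<lambda>_. P))"
  proof
    fix C assume "C \<in> iter_join M T P n"
    then obtain a where a: "\<forall>i<n. a i \<in> P" "C = ?f a" unfolding iter_join_def by blast
    have "restrict a {..<n} \<in> PiE {..<n} (\<lambda>_. P)" using a(1) by auto
    moreover have "(\<Inter>i\<in>{..<n}. (T ^^ i) -` (restrict a {..<n} i)) = (\<Inter>i\<in>{..<n}. (T ^^ i) -` (a i))"
      by auto
    then have "C = ?f (restrict a {..<n})" using a(2) by simp
    ultimately show "C \<in> ?f ` (PiE {..<n} (\<lambda>_. P))" by blast
  qed
  moreover have "finite (?f ` (PiE {..<n} (\<lambda>_. P)))"
    using assms by (intro finite_imageI finite_PiE) auto
  ultimately show ?thesis by (rule finite_subset)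
qed

lemma iter_join_disjoint:
  assumes "disjoint P" shows "disjoint (iter_join M T P n)"
proof (rule disjointI)
  fix C C' assume C: "C \<in> iter_join M T P n" and C': "C' \<in> iter_join M T P n" and ne: "C \<noteq> C'"
  obtain a where a: "\<forall>i<n. a i \<in> P" "C = space M \<inter> (\<Inter>i\<in>{..<n}. (T ^^ i) -` (a i))"
    using C unfolding iter_join_def by blast
  obtain b where b: "\<forall>i<n. b i \<in> P" "C' = space M \<inter> (\<Inter>i\<in>{..<n}. (T ^^ i) -` (b i))"
    using C' unfolding iter_join_def by blast
  have "\<exists>i<n. a i \<noteq> b i"
  proof (rule ccontr)
    assume "\<not> ?thesis"
    then have "C = C'" using a b by auto
    with ne show False by simp
  qed
  then obtain i where i: "i < n" "a i \<noteq> b i" by blast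
  have "a i \<inter> b i = {}" using assms a b i by (meson disjointD)
  then show "C \<inter> C' = {}" using a b i by blast
qed

lemma sum_measure_le1:
  assumes "prob_space M" "finite Q" "disjoint Q"
  shows "(\<Sum>A\<in>Q. measure M A) \<le> 1"
proof -
  have "(\<Sum>A\<in>Q. measure M A) = (\<Sum>A\<in>Q \<inter> sets M. measure M A)"
    using assms(2) by (intro sum.mono_neutral_right) (auto simp: measure_notin_sets)
  also have "\<dots> = measure M (\<Union>A\<in>Q \<inter> sets M. A)"
  proof (rule measure_finite_Union[symmetric])
    show "finite (Q \<inter> sets M)" using assms(2) by simp
    show "(\<lambda>A. A) ` (Q \<inter> sets M) \<subseteq> sets M" by auto
    show "disjoint_family_on (\<lambda>A. A) (Q \<inter> sets M)"
      using assms(3) unfolding disjoint_family_on_def disjoint_def by blast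
    show "\<And>i. i \<in> Q \<inter> sets M \<Longrightarrow> emeasure M i \<noteq> \<infinity>"
      using assms(1) by (simp add: prob_space_def finite_measure.emeasure_finite)
  qed
  also have "\<dots> \<le> 1" using assms(1) prob_space.prob_le_1 by blast
  finally show ?thesis .
qed

lemma G0_lower:
  assumes "g \<in> G0" "0 \<le> x" "x \<le> 1" shows "x * g 1 \<le> g x"
proof -
  have c: "concave_on {0..1} g" "g 0 = 0" using assms(1) by (auto simp: G0_def)
  have "(1 - x) * g 0 + x * g 1 \<le> g ((1 - x) *\<^sub>R 0 + x *\<^sub>R 1)"
    by (rule concave_onD[OF c(1)]) (use assms in auto)
  then show ?thesis using c by simp
qed

lemma G0_bound:
  assumes "g \<in> G0" "0 < d" "d \<le> x" "x \<le> 1"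
  shows "\<bar>g x\<bar> \<le> \<bar>g d\<bar> / d + \<bar>g d\<bar> + \<bar>g 1\<bar>"
proof -
  have c: "concave_on {0..1} g" "g 0 = 0" using assms(1) by (auto simp: G0_def)
  have x0: "0 < x" using assms by simp
  have tt: "0 \<le> d/x" "d/x \<le> 1" using assms x0 by (auto simp: divide_le_eq_1)
  have "(1 - d/x) * g 0 + (d/x) * g x \<le> g ((1 - d/x) *\<^sub>R 0 + (d/x) *\<^sub>R x)"
    by (rule concave_onD[OF c(1) tt]) (use assms in auto)
  then have "(d/x) * g x \<le> g d" using c x0 by simp
  then have "d * g x \<le> x * g d" using x0 by (simp add: field_simps)
  also have "x * g d \<le> x * \<bar>g d\<bar>" using x0 by (intro mult_left_mono) auto
  also have "\<dots> \<le> \<bar>g d\<bar>" using assms by (simp add: mult_left_le_one_le)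
  finally have "d * g x \<le> \<bar>g d\<bar>" .
  then have up: "g x \<le> \<bar>g d\<bar> / d" using assms by (simp add: field_simps)
  define t where "t = (1 - x) / (1 - d)"
  have lo: "min (g d) (g 1) \<le> g x"
  proof (cases "d = 1")
    case True then show ?thesis using assms by auto
  next
    case False
    then have d1: "d < 1" using assms by simp
    have t: "0 \<le> t" "t \<le> 1" using assms d1 by (auto simp: t_def field_simps)
    have "t * (1 - d) = 1 - x" using d1 by (simp add: t_def)
    then have xe: "(1 - t) *\<^sub>R 1 + t *\<^sub>R d = x" by (simp add: algebra_simps)
    have "(1 - t) * g 1 + t * g d \<le> g ((1 - t) *\<^sub>R 1 + t *\<^sub>R d)"
      by (rule concave_onD[OF c(1)]) (use assms t in auto)
    then have "(1 - t) * g 1 + t * g d \<le> g x" using xe by simp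
    moreover have "min (g d) (g 1) \<le> (1 - t) * g 1 + t * g d"
    proof -
      have "(1 - t) * min (g d) (g 1) \<le> (1 - t) * g 1" using t by (intro mult_left_mono) auto
      moreover have "t * min (g d) (g 1) \<le> t * g d" using t by (intro mult_left_mono) auto
      ultimately show ?thesis by (simp add: algebra_simps)
    qed
    ultimately show ?thesis by linarith
  qed
  have "0 \<le> \<bar>g d\<bar> / d" using assms by simp
  moreover have "- \<bar>g d\<bar> - \<bar>g 1\<bar> \<le> g x"
    using lo by (auto simp: min_def split: if_splits)
  ultimately show ?thesis using up by (simp add: abs_le_iff)
qed


lemma key_est:
  assumes g1: "g1 \<in> G0" and g2: "g2 \<in> G0"
    and pos: "\<And>x. 0 < x \<Longrightarrow> x < 1 \<Longrightarrow> g2 x > 0"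
    and lim: "((\<lambda>x. g1 x / g2 x) \<longlongrightarrow> L) (at_right 0)"
    and e: "e > 0"
  shows "\<exists>D\<ge>0. \<forall>x\<in>{0..1}. \<bar>g1 x - L * g2 x\<bar> \<le> e * g2 x + D * x"
proof -
  have "eventually (\<lambda>x. dist (g1 x / g2 x) L < e) (at_right 0)"
    using lim e by (rule tendstoD)
  then obtain b where b: "b > 0" "\<And>y. y > 0 \<Longrightarrow> y < b \<Longrightarrow> \<bar>g1 y / g2 y - L\<bar> < e"
    unfolding eventually_at_right_field dist_real_def by auto
  define d where "d = min b (1/2)"
  have d: "0 < d" "d < 1" "d \<le> b" using b by (auto simp: d_def)
  define B1 where "B1 = \<bar>g1 d\<bar> / d + \<bar>g1 d\<bar> + \<bar>g1 1\<bar>"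
  define B2 where "B2 = \<bar>g2 d\<bar> / d + \<bar>g2 d\<bar> + \<bar>g2 1\<bar>"
  define K where "K = B1 + \<bar>L\<bar> * B2"
  define D where "D = (K + e * B2) / d"
  have B: "B1 \<ge> 0" "B2 \<ge> 0" using d by (auto simp: B1_def B2_def)
  then have K0: "K \<ge> 0" by (simp add: K_def)
  have D0: "D \<ge> 0" using K0 B e d by (simp add: D_def)
  have g0: "g1 0 = 0" "g2 0 = 0" using g1 g2 by (auto simp: G0_def)
  show ?thesis
  proof (intro exI conjI ballI)
    show "D \<ge> 0" by (rule D0)
    fix x :: real assume x: "x \<in> {0..1}"
    consider "x = 0" | "0 < x" "x < d" | "d \<le> x" using x by force
    then show "\<bar>g1 x - L * g2 x\<bar> \<le> e * g2 x + D * x"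
    proof cases
      case 1 then show ?thesis using g0 by simp
    next
      case 2
      have gp: "g2 x > 0" using pos[of x] 2 d by simp
      have "\<bar>g1 x / g2 x - L\<bar> < e" using b(2)[of x] 2 d by simp
      moreover have "g1 x - L * g2 x = (g1 x / g2 x - L) * g2 x" using gp by (simp add: field_simps)
      ultimately have "\<bar>g1 x - L * g2 x\<bar> \<le> e * g2 x" using gp
        by (simp add: abs_mult)
      moreover have "D * x \<ge> 0" using D0 2 by simp
      ultimately show ?thesis by linarith
    next
      case 3
      have a1: "\<bar>g1 x\<bar> \<le> B1" unfolding B1_def by (rule G0_bound[OF g1 d(1) 3]) (use x in simp)
      have a2: "\<bar>g2 x\<bar> \<le> B2" unfolding B2_def by (rule G0_bound[OF g2 d(1) 3]) (use x in simp)
      have "\<bar>L * g2 x\<bar> \<le> \<bar>L\<bar> * B2" using a2 by (simp add: abs_mult mult_left_mono)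
      then have "\<bar>g1 x - L * g2 x\<bar> \<le> K" using a1 unfolding K_def by linarith
      moreover have "e * (- B2) \<le> e * g2 x" using a2 e by (intro mult_left_mono) auto
      then have "e * g2 x \<ge> - (e * B2)" by simp
      moreover have "D * x \<ge> D * d" using D0 3 by (simp add: mult_left_mono)
      moreover have "D * d = K + e * B2" using d by (simp add: D_def)
      ultimately show ?thesis by linarith
    qed
  qed
qed

lemma measure_01:
  assumes "prob_space M" shows "0 \<le> measure M A" "measure M A \<le> 1"
  using assms prob_space.prob_le_1 by auto

lemma sum_est:
  assumes M: "prob_space M" and Q: "finite Q" "disjoint Q"
    and D: "D \<ge> 0" and est: "\<forall>x\<in>{0..1}. \<bar>g1 x - L * g2 x\<bar> \<le> e * g2 x + D * x"
  shows "\<bar>Hg M g1 Q - L * Hg M g2 Q\<bar> \<le> e * Hg M g2 Q + D"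
proof -
  have "Hg M g1 Q - L * Hg M g2 Q = (\<Sum>A\<in>Q. g1 (measure M A) - L * g2 (measure M A))"
    by (simp add: Hg_def sum_subtractf sum_distrib_left)
  then have "\<bar>Hg M g1 Q - L * Hg M g2 Q\<bar> \<le> (\<Sum>A\<in>Q. \<bar>g1 (measure M A) - L * g2 (measure M A)\<bar>)"
    by (simp add: sum_abs)
  also have "\<dots> \<le> (\<Sum>A\<in>Q. e * g2 (measure M A) + D * measure M A)"
    using est measure_01[OF M] by (intro sum_mono) auto
  also have "\<dots> = e * Hg M g2 Q + D * (\<Sum>A\<in>Q. measure M A)"
    by (simp add: Hg_def sum.distrib sum_distrib_left)
  also have "\<dots> \<le> e * Hg M g2 Q + D"
    using sum_measure_le1[OF M Q] D by (simp add: mult_left_le)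
  finally show ?thesis .
qed

lemma Hg_lower:
  assumes M: "prob_space M" and Q: "finite Q" "disjoint Q" and g: "g \<in> G0"
  shows "- \<bar>g 1\<bar> \<le> Hg M g Q"
proof -
  have S: "0 \<le> (\<Sum>A\<in>Q. measure M A)" "(\<Sum>A\<in>Q. measure M A) \<le> 1"
    using sum_measure_le1[OF M Q] by (auto intro: sum_nonneg)
  have "- \<bar>g 1\<bar> \<le> (\<Sum>A\<in>Q. measure M A) * g 1"
  proof (cases "g 1 \<ge> 0")
    case True
    then have "0 \<le> (\<Sum>A\<in>Q. measure M A) * g 1" using S by simp
    then show ?thesis using True by simp
  next
    case False
    then have "1 * g 1 \<le> (\<Sum>A\<in>Q. measure M A) * g 1" using S by (intro mult_right_mono_neg) auto
    then show ?thesis using False by simp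
  qed
  also have "\<dots> = (\<Sum>A\<in>Q. measure M A * g 1)" by (simp add: sum_distrib_right)
  also have "\<dots> \<le> Hg M g Q" unfolding Hg_def
    using G0_lower[OF g] measure_01[OF M] by (intro sum_mono) auto
  finally show ?thesis .
qed

theorem mainTheorem4:
  fixes M :: "'a measure" and T :: "'a \<Rightarrow> 'a"
    and g1 g2 :: "real \<Rightarrow> real" and L :: real and P :: "'a set set"
  assumes "prob_space M"
    and "measure_preserving_map M T"
    and "g1 \<in> G0" and "g2 \<in> G0"
    and "\<And>x. 0 < x \<Longrightarrow> x < 1 \<Longrightarrow> g2 x > 0"
    and "((\<lambda>x. g1 x / g2 x) \<longlongrightarrow> L) (at_right 0)"
    and "finite_partition M P"
    and "hg M T g2 P < \<infinity>"
  shows "hg M T g1 P = ereal L * hg M T g2 P"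
proof -
  note M = assms(1)
  have Pf: "finite P" and Pd: "disjoint P" using assms(7) by (auto simp: finite_partition_def)
  define Q where "Q n = iter_join M T P n" for n
  have Qf: "finite (Q n)" and Qd: "disjoint (Q n)" for n
    unfolding Q_def using iter_join_finite[OF Pf] iter_join_disjoint[OF Pd] by auto
  define a where "a n = Hg M g2 (Q n) / real n" for n
  define b where "b n = Hg M g1 (Q n) / real n" for n
  have ha: "hg M T g2 P = limsup (\<lambda>n. ereal (a n))" by (simp add: hg_def a_def Q_def)
  have hb: "hg M T g1 P = limsup (\<lambda>n. ereal (b n))" by (simp add: hg_def b_def Q_def)
  have "limsup (\<lambda>n. ereal (a n)) \<noteq> \<infinity>" using assms(8) ha by simp
  then obtain k :: nat where r: "limsup (\<lambda>n. ereal (a n)) < ereal (real k)"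
    using less_PInf_Ex_of_nat by blast
  define r where "r = real k"
  have evr: "eventually (\<lambda>n. a n < r) sequentially"
    using Limsup_lessD[OF r] by (simp add: r_def)
  define R where "R = max r 1"
  have R: "R > 0" "r \<le> R" by (auto simp: R_def)
  define c1 where "c1 = \<bar>g1 1\<bar>"
  define c2 where "c2 = \<bar>g2 1\<bar>"
  have lowa: "- c2 / real n \<le> a n" for n
    unfolding a_def c2_def using Hg_lower[OF M Qf Qd assms(4)]
    by (intro divide_right_mono) auto
  have lowb: "- c1 / real n \<le> b n" for n
    unfolding b_def c1_def using Hg_lower[OF M Qf Qd assms(3)]
    by (intro divide_right_mono) auto
  define e where "e n = b n - L * a n" for n
  have e0: "e \<longlonglongrightarrow> 0"
  proof (rule tendstoI)
    fix \<epsilon> :: real assume \<epsilon>: "\<epsilon> > 0"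
    define \<epsilon>' where "\<epsilon>' = \<epsilon> / (2 * R)"
    have \<epsilon>': "\<epsilon>' > 0" "\<epsilon>' * R = \<epsilon> / 2" using \<epsilon> R by (auto simp: \<epsilon>'_def)
    obtain D where D: "D \<ge> 0" "\<forall>x\<in>{0..1}. \<bar>g1 x - L * g2 x\<bar> \<le> \<epsilon>' * g2 x + D * x"
      using key_est[OF assms(3,4,5,6) \<epsilon>'(1)] by blast
    have se: "\<bar>Hg M g1 (Q n) - L * Hg M g2 (Q n)\<bar> \<le> \<epsilon>' * Hg M g2 (Q n) + D" for n
      by (rule sum_est[OF M Qf Qd D])
    obtain N :: nat where N: "2 * D / \<epsilon> < real N" using reals_Archimedean2 by blast
    have "eventually (\<lambda>n. n \<ge> Suc N \<and> a n < r) sequentially"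
      using evr eventually_ge_at_top[of "Suc N"] by eventually_elim auto
    then show "eventually (\<lambda>n. dist (e n) 0 < \<epsilon>) sequentially"
    proof eventually_elim
      case (elim n)
      have n0: "real n > 0" using elim by simp
      have nN: "real n > 2 * D / \<epsilon>" using elim N by linarith
      have "\<bar>e n\<bar> = \<bar>Hg M g1 (Q n) - L * Hg M g2 (Q n)\<bar> / real n"
        using n0 by (simp add: e_def a_def b_def field_simps)
      also have "\<dots> \<le> (\<epsilon>' * Hg M g2 (Q n) + D) / real n"
        using se[of n] n0 by (simp add: divide_right_mono)
      also have "\<dots> = \<epsilon>' * a n + D / real n" by (simp add: a_def add_divide_distrib)
      also have "\<epsilon>' * a n \<le> \<epsilon>' * R" using elim R \<epsilon>' by (intro mult_left_mono) auto
      then have "\<epsilon>' * a n + D / real n \<le> \<epsilon> / 2 + D / real n" using \<epsilon>' by linarith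
      also have "D / real n < \<epsilon> / 2"
        using nN n0 \<epsilon> by (simp add: field_simps)
      finally show ?case by simp
    qed
  qed
  have beq: "b n = L * a n + e n" for n by (simp add: e_def)
  show ?thesis
  proof (cases "L \<ge> 0")
    case True
    have "limsup (\<lambda>n. ereal (b n)) = limsup (\<lambda>n. ereal (e n) + ereal L * ereal (a n))"
      by (simp add: beq add.commute)
    also have "\<dots> = ereal 0 + limsup (\<lambda>n. ereal L * ereal (a n))"
      by (rule ereal_limsup_lim_add) (use e0 in auto)
    also have "\<dots> = ereal 0 + ereal L * limsup (\<lambda>n. ereal (a n))"
      by (simp only: Limsup_ereal_mult_left[OF sequentially_bot True])
    also have "\<dots> = ereal L * limsup (\<lambda>n. ereal (a n))" by (simp add: zero_ereal_def[symmetric])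
    finally show ?thesis using ha hb by simp
  next
    case False
    then have L: "-L > 0" by simp
    have up: "a n \<le> (c1 / real n + e n) / (-L)" for n
    proof -
      have m: "- c1 / real n = - (c1 / real n)" by (rule minus_divide_left[symmetric])
      have "- c1 / real n \<le> L * a n + e n" using lowb[of n] beq[of n] by simp
      then have "- (L * a n) \<le> c1 / real n + e n" unfolding m by linarith
      then have "a n * (-L) \<le> c1 / real n + e n" by (simp add: mult.commute)
      then show ?thesis using L by (subst pos_le_divide_eq) auto
    qed
    have l1: "(\<lambda>n. - c2 / real n) \<longlonglongrightarrow> 0" by (rule lim_const_over_n)
    have l2: "(\<lambda>n. c1 / real n) \<longlonglongrightarrow> 0" by (rule lim_const_over_n)
    have l3': "(\<lambda>n. (c1 / real n + e n) / (-L)) \<longlonglongrightarrow> (0 + 0) / (-L)"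
      by (rule tendsto_divide[OF tendsto_add[OF l2 e0] tendsto_const]) (use L in simp)
    then have l3: "(\<lambda>n. (c1 / real n + e n) / (-L)) \<longlonglongrightarrow> 0" by simp
    have ev1: "eventually (\<lambda>n. - c2 / real n \<le> a n) sequentially"
      by (rule always_eventually) (use lowa in blast)
    have ev2: "eventually (\<lambda>n. a n \<le> (c1 / real n + e n) / (-L)) sequentially"
      by (rule always_eventually) (use up in blast)
    have a0: "a \<longlonglongrightarrow> 0" by (rule tendsto_sandwich[OF ev1 ev2 l1 l3])
    have b0': "(\<lambda>n. L * a n + e n) \<longlonglongrightarrow> L * 0 + 0"
      by (rule tendsto_add[OF tendsto_mult[OF tendsto_const a0] e0])
    have bfun: "b = (\<lambda>n. L * a n + e n)" by (rule ext) (rule beq)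
    have b0: "b \<longlonglongrightarrow> 0" using b0' unfolding bfun by simp
    have A0: "limsup (\<lambda>n. ereal (a n)) = ereal 0"
      by (rule lim_imp_Limsup[OF trivial_limit_sequentially tendsto_ereal[OF a0]])
    have B0: "limsup (\<lambda>n. ereal (b n)) = ereal 0"
      by (rule lim_imp_Limsup[OF trivial_limit_sequentially tendsto_ereal[OF b0]])
    show ?thesis unfolding ha hb A0 B0 by simp
  qed
qed

end
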